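(* Let $A\in\mathbb{R}^{n\times n}$, $b\in\mathbb{R}^n$, $x^0\in\mathbb{R}^n$. Suppose that the generalized Newton method $x^{k+1}=(A-D(x^k))^{-1}b$ is well defined for all $k\ge 0$ (i.e. every $A-D(x^k)$ is nonsingular) and that the sequence $\{x^k\}$ converges to some vector $x^*$. Then $x^*$ is a solution of $Ax-|x|=b$, and $x^k=x^*$ for all sufficiently large $k$. (No uniqueness of solutions of the equation is assumed.)
   Context: For $x\in\mathbb{R}^n$, $|x|$ is the componentwise absolute value, $\mathrm{sign}(x)$ is the vector whose components are $1,0,-1$ according as the corresponding component of $x$ is positive, zero, negative, and $D(x)=\mathrm{diag}(\mathrm{sign}(x))$. The generalized Newton method (GNM) for the absolute value equation $Ax-|x|=b$ is the iteration $x^{k+1}=(A-D(x^k))^{-1}b$, $k=0,1,\ldots$, from a given starting vector $x^0$. *)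

theory Defs
  imports "HOL-Analysis.Analysis"
begin

definition vabs :: "real ^ 'n \<Rightarrow> real ^ 'n" where
  "vabs x = (\<chi> i. \<bar>x $ i\<bar>)"

definition vsign :: "real ^ 'n \<Rightarrow> real ^ 'n" where
  "vsign x = (\<chi> i. sgn (x $ i))"

definition Dsign :: "real ^ 'n \<Rightarrow> real ^ 'n ^ 'n" where
  "Dsign x = (\<chi> i j. if i = j then vsign x $ i else 0)"

end

theory Submission
  imports Defs
begin

lemma Dsign_mult: "Dsign y *v z = (\<chi> i. sgn (y $ i) * z $ i)"
proof -
  have "(\<Sum>j\<in>UNIV. (if i = j then sgn (y $ i) else 0) * z $ j) = sgn (y $ i) * z $ i" for i
    by (simp add: if_distrib[of "\<lambda>t. t * _"] cong: if_cong)
  then show ?thesis unfolding Dsign_def vsign_def matrix_vector_mult_def vec_eq_iff by (simp only: vec_lambda_beta) simp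
qed

lemma matrix_inv_right': "invertible M \<Longrightarrow> M ** matrix_inv M = mat 1"
  unfolding invertible_def matrix_inv_def by (rule someI_ex[THEN conjunct1])

lemma finite_range_vsign: "finite (range (vsign :: real ^ 'n \<Rightarrow> real ^ 'n))"
proof -
  have fin: "finite {f :: 'n \<Rightarrow> real. \<forall>x. (x \<in> UNIV \<longrightarrow> f x \<in> {-1,0,1}) \<and> (x \<notin> UNIV \<longrightarrow> f x = 0)}"
    by (rule finite_set_of_finite_funs) auto
  have "range (vsign :: real ^ 'n \<Rightarrow> real ^ 'n) \<subseteq> vec_lambda ` {f :: 'n \<Rightarrow> real. \<forall>x. (x \<in> UNIV \<longrightarrow> f x \<in> {-1,0,1}) \<and> (x \<notin> UNIV \<longrightarrow> f x = 0)}"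
  proof
    fix v assume "v \<in> range (vsign :: real ^ 'n \<Rightarrow> real ^ 'n)"
    then obtain y where "v = vsign y" by auto
    then show "v \<in> vec_lambda ` {f :: 'n \<Rightarrow> real. \<forall>x. (x \<in> UNIV \<longrightarrow> f x \<in> {-1,0,1}) \<and> (x \<notin> UNIV \<longrightarrow> f x = 0)}"
      unfolding vsign_def by (rule image_eqI[where x="\<lambda>i. sgn (y $ i)"]) (auto simp: sgn_real_def)
  qed
  then show ?thesis using fin finite_subset by blast
qed

theorem corollary3p4:
  fixes A :: "real ^ 'n ^ 'n" and b :: "real ^ 'n"
    and x :: "nat \<Rightarrow> real ^ 'n" and xstar :: "real ^ 'n"
  assumes nonsing: "\<And>k. invertible (A - Dsign (x k))"
    and gnm: "\<And>k. x (Suc k) = matrix_inv (A - Dsign (x k)) *v b"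
    and conv: "x \<longlonglongrightarrow> xstar"
  shows "A *v xstar - vabs xstar = b \<and> (\<exists>K. \<forall>k\<ge>K. x k = xstar)"
proof
  have eq: "A *v x (Suc k) - Dsign (x k) *v x (Suc k) = b" for k
  proof -
    have "(A - Dsign (x k)) *v x (Suc k) = b"
      using nonsing[of k] gnm[of k]
      by (simp add: matrix_vector_mul_assoc matrix_inv_right')
    then show ?thesis by (simp add: matrix_vector_mult_diff_rdistrib)
  qed
  have c1: "(\<lambda>k. x (Suc k)) \<longlonglongrightarrow> xstar" using conv by (rule LIMSEQ_Suc)
  have l1: "(\<lambda>k. A *v x (Suc k)) \<longlonglongrightarrow> A *v xstar"
    using bounded_linear.tendsto[OF matrix_vector_mul_bounded_linear c1] .
  have l2: "(\<lambda>k. Dsign (x k) *v x (Suc k)) \<longlonglongrightarrow> vabs xstar"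
    unfolding Dsign_mult vabs_def
  proof (rule tendsto_vec_lambda)
    fix i
    have a: "(\<lambda>k. \<bar>x k $ i\<bar>) \<longlonglongrightarrow> \<bar>xstar $ i\<bar>"
      by (intro tendsto_intros conv)
    have d: "(\<lambda>k. x (Suc k) $ i - x k $ i) \<longlonglongrightarrow> 0"
      using tendsto_diff[OF tendsto_vec_nth[OF c1, of i] tendsto_vec_nth[OF conv, of i]] by simp
    have z: "(\<lambda>k. sgn (x k $ i) * (x (Suc k) $ i - x k $ i)) \<longlonglongrightarrow> 0"
    proof (rule Lim_null_comparison[OF _ tendsto_rabs_zero[OF d]])
      show "\<forall>\<^sub>F k in sequentially. norm (sgn (x k $ i) * (x (Suc k) $ i - x k $ i)) \<le> \<bar>x (Suc k) $ i - x k $ i\<bar>"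
        by (auto simp: abs_mult sgn_real_def)
    qed
    have "(\<lambda>k. \<bar>x k $ i\<bar> + sgn (x k $ i) * (x (Suc k) $ i - x k $ i)) \<longlonglongrightarrow> \<bar>xstar $ i\<bar>"
      using tendsto_add[OF a z] by simp
    moreover have "\<bar>x k $ i\<bar> + sgn (x k $ i) * (x (Suc k) $ i - x k $ i) = sgn (x k $ i) * x (Suc k) $ i" for k
      by (simp add: algebra_simps sgn_mult_abs abs_sgn mult.commute)
    ultimately show "(\<lambda>k. sgn (x k $ i) * x (Suc k) $ i) \<longlonglongrightarrow> \<bar>xstar $ i\<bar>" by simp
  qed
  have "(\<lambda>k. A *v x (Suc k) - Dsign (x k) *v x (Suc k)) \<longlonglongrightarrow> A *v xstar - vabs xstar"
    by (rule tendsto_diff[OF l1 l2])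
  then have "(\<lambda>k. b) \<longlonglongrightarrow> A *v xstar - vabs xstar" using eq by simp
  then show "A *v xstar - vabs xstar = b" using LIMSEQ_unique tendsto_const by blast
next
  define g where "g v = matrix_inv (A - (\<chi> i j. if i = j then v $ i else 0)) *v b" for v :: "real ^ 'n"
  define F where "F = g ` range vsign"
  have finF: "finite F" unfolding F_def using finite_range_vsign by blast
  have inF: "x (Suc k) \<in> F" for k
    unfolding F_def g_def using gnm[of k] by (auto simp: Dsign_def)
  have "\<forall>\<^sub>F k in sequentially. \<forall>y\<in>F - {xstar}. x (Suc k) \<noteq> y"
  proof (rule eventually_ball_finite)
    show "finite (F - {xstar})" using finF by simp
    show "\<forall>y\<in>F - {xstar}. \<forall>\<^sub>F k in sequentially. x (Suc k) \<noteq> y"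
    proof
      fix y assume "y \<in> F - {xstar}"
      then have "dist y xstar > 0" by auto
      from tendstoD[OF LIMSEQ_Suc[OF conv] this]
      show "\<forall>\<^sub>F k in sequentially. x (Suc k) \<noteq> y"
        by (rule eventually_mono) auto
    qed
  qed
  then obtain K where K: "\<And>k. k \<ge> K \<Longrightarrow> \<forall>y\<in>F - {xstar}. x (Suc k) \<noteq> y"
    unfolding eventually_sequentially by blast
  show "\<exists>K. \<forall>k\<ge>K. x k = xstar"
  proof (intro exI allI impI)
    fix k assume "k \<ge> Suc K"
    then obtain m where m: "k = Suc m" "m \<ge> K" by (cases k) auto
    show "x k = xstar" using K[OF m(2)] inF[of m] m(1) by blast
  qed
qed

end
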